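(* Let $n,s$ be integers with $(n+1)/3\le s\le n/2$ and let $L=[s]=\{1,\ldots,s\}$. If $\mathcal{F}\subseteq 2^{[n]}$ is $L$-close Sperner, then $$|\mathcal{F}|\le\sum_{i=3s-n}^{s}\binom{n}{i}.$$
   Context: $[n]=\{1,\ldots,n\}$ and $2^{[n]}$ is the family of all subsets of $[n]$. For a set $L$ of positive integers, $\mathcal{F}\subseteq2^{[n]}$ is $L$-close Sperner if for all distinct $A,B\in\mathcal{F}$, the skew distance $\mathrm{sd}(A,B)=\min\{|A\setminus B|,|B\setminus A|\}$ lies in $L$. *)

theory Defs
  imports Main
begin

definition skew_dist :: "nat set \<Rightarrow> nat set \<Rightarrow> nat" where
  "skew_dist A B = min (card (A - B)) (card (B - A))"

definition close_sperner :: "nat set \<Rightarrow> nat \<Rightarrow> nat set set \<Rightarrow> bool" where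
  "close_sperner L n F \<longleftrightarrow> F \<subseteq> Pow {1..n} \<and>
     (\<forall>A\<in>F. \<forall>B\<in>F. A \<noteq> B \<longrightarrow> skew_dist A B \<in> L)"

end

theory Submission
  imports Defs Complex_Main "HOL-Library.Function_Algebras"
begin


interpretation V: vector_space "\<lambda>(c::real) (f::nat set \<Rightarrow> real). (\<lambda>x. c * f x)"
  by unfold_locales (auto simp: fun_eq_iff algebra_simps)

lemma lin_span:
  assumes add: "\<And>f g. L (f + g) = L f + L g"
    and sc: "\<And>c f. L (\<lambda>x. c * f x) = (\<lambda>x. c * L f x)"
    and img: "L ` B \<subseteq> V.span C"
    and g: "g \<in> V.span B"
  shows "L g \<in> V.span C"
  using g
proof (induction rule: V.span_induct_alt)
  case base
  have "L 0 = L 0 + L 0" using add[of 0 0] by simp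
  then have "L 0 = 0" by simp
  then show ?case using V.span_zero[of C] by (simp add: zero_fun_def)
next
  case (step c x y)
  have 1: "L (\<lambda>xa. c * x xa) \<in> V.span C"
    unfolding sc using img step(1) by (auto intro: V.span_scale)
  have e: "L ((\<lambda>a. c * x a) + y) = L (\<lambda>a. c * x a) + L y" by (rule add)
  have f: "(\<lambda>a. c * x a) + y = (\<lambda>a. c * x a + y a)" by (simp add: fun_eq_iff)
  show ?case using V.span_add[OF 1 step(2)] unfolding e[symmetric] f .
qed

definition Dom :: "nat \<Rightarrow> nat \<Rightarrow> nat \<Rightarrow> nat set set" where
  "Dom n a b = {X. X \<subseteq> {1..n} \<and> a \<le> card X \<and> card X \<le> b}"

definition mon :: "nat set set \<Rightarrow> nat set \<Rightarrow> nat set \<Rightarrow> real" where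
  "mon D S = (\<lambda>X. if X \<in> D \<and> S \<subseteq> X then 1 else 0)"

definition gens :: "nat \<Rightarrow> nat \<Rightarrow> nat \<Rightarrow> nat set set" where
  "gens n a b = {S. S \<subseteq> {1..n} \<and> a \<le> card S \<and> card S \<le> b}"

definition Msp :: "nat set set \<Rightarrow> nat \<Rightarrow> nat \<Rightarrow> nat \<Rightarrow> (nat set \<Rightarrow> real) set" where
  "Msp D n a b = V.span (mon D ` gens n a b)"

definition Ei :: "nat \<Rightarrow> (nat set \<Rightarrow> real) \<Rightarrow> (nat set \<Rightarrow> real)" where
  "Ei i g = (\<lambda>X. (if i \<in> X then 1 else 0) * g X)"

lemma Msp_mono: "a' \<le> a \<Longrightarrow> b \<le> b' \<Longrightarrow> Msp D n a b \<subseteq> Msp D n a' b'"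
  unfolding Msp_def gens_def by (rule V.span_mono) auto

lemma mon_in: "S \<in> gens n a b \<Longrightarrow> mon D S \<in> Msp D n a b"
  unfolding Msp_def by (rule V.span_base) auto

lemma Ei_Msp:
  assumes i: "i \<in> {1..n}" and g: "g \<in> Msp D n a b"
  shows "Ei i g \<in> Msp D n a (Suc b)"
proof -
  have img: "Ei i ` (mon D ` gens n a b) \<subseteq> V.span (mon D ` gens n a (Suc b))"
  proof
    fix h assume "h \<in> Ei i ` (mon D ` gens n a b)"
    then obtain S where S: "S \<in> gens n a b" "h = Ei i (mon D S)" by auto
    have h: "h = mon D (insert i S)"
      using S(2) by (auto simp: Ei_def mon_def fun_eq_iff)
    have fin: "finite S" using S(1) unfolding gens_def by (auto intro: finite_subset)
    have c1: "card S \<le> card (insert i S)" by (rule card_insert_le)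
    have c2: "card (insert i S) \<le> Suc (card S)" using card_insert_if[OF fin, of i] by simp
    have "insert i S \<in> gens n a (Suc b)"
      using S(1) i c1 c2 unfolding gens_def by auto
    then show "h \<in> V.span (mon D ` gens n a (Suc b))"
      unfolding h by (intro V.span_base) auto
  qed
  show ?thesis unfolding Msp_def
    by (rule lin_span[OF _ _ img g[unfolded Msp_def]]) (simp_all add: Ei_def fun_eq_iff distrib_left)
qed

lemma sum_fun_apply: "(\<Sum>i\<in>A. (f i :: nat set \<Rightarrow> real)) X = (\<Sum>i\<in>A. f i X)"
  by (induction A rule: infinite_finite_induct) auto

lemma Msp_sum: "(\<And>i. i \<in> A \<Longrightarrow> f i \<in> Msp D n a b) \<Longrightarrow> sum f A \<in> Msp D n a b"
  unfolding Msp_def by (rule V.span_sum)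



lemma sum_ind: "finite W \<Longrightarrow> (\<Sum>i\<in>W. (if i \<in> X then 1 else 0::real)) = real (card (W \<inter> X))"
  by (simp add: sum.If_cases Int_def)

lemma Ei_apply: "Ei i g X = (if i \<in> X then 1 else 0) * g X"
  by (simp add: Ei_def)

lemma sumEi_apply: "(\<Sum>i\<in>W. Ei i g) X = (\<Sum>i\<in>W. (if i \<in> X then 1 else 0::real)) * g X"
  by (simp add: sum_fun_apply Ei_apply sum_distrib_right)

lemma sumEi_Msp:
  assumes "W \<subseteq> {1..n}" "g \<in> Msp D n a b"
  shows "(\<Sum>i\<in>W. Ei i g) \<in> Msp D n a (Suc b)"
  using assms by (intro Msp_sum Ei_Msp) auto

lemma Msp_scale: "g \<in> Msp D n a b \<Longrightarrow> (\<lambda>X. c * g X) \<in> Msp D n a b"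
  unfolding Msp_def by (rule V.span_scale)

lemma Msp_diff: "g \<in> Msp D n a b \<Longrightarrow> h \<in> Msp D n a b \<Longrightarrow> g - h \<in> Msp D n a b"
  unfolding Msp_def by (rule V.span_diff)

lemma Msp_add: "g \<in> Msp D n a b \<Longrightarrow> h \<in> Msp D n a b \<Longrightarrow> g + h \<in> Msp D n a b"
  unfolding Msp_def by (rule V.span_add)

lemma gj_Msp:
  assumes D: "\<And>X. X \<in> D \<Longrightarrow> X \<subseteq> {1..n}"
  shows "(\<lambda>X. if X \<in> D then (\<Prod>l=1..j. real (card (X - A)) - real l) else 0) \<in> Msp D n 0 j"
proof (induction j)
  case 0
  have "(\<lambda>X. if X \<in> D then (\<Prod>l=1..0. real (card (X - A)) - real l) else 0) = mon D {}"
    by (simp add: mon_def fun_eq_iff)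
  moreover have "{} \<in> gens n 0 0" by (simp add: gens_def)
  ultimately show ?case using mon_in by metis
next
  case (Suc j)
  let ?g = "\<lambda>X. if X \<in> D then (\<Prod>l=1..j. real (card (X - A)) - real l) else 0"
  let ?W = "{1..n} - A"
  have eq: "(\<lambda>X. if X \<in> D then (\<Prod>l=1..Suc j. real (card (X - A)) - real l) else 0)
      = (\<Sum>i\<in>?W. Ei i ?g) - (\<lambda>X. real (Suc j) * ?g X)"
  proof (rule ext)
    fix X
    show "(if X \<in> D then (\<Prod>l=1..Suc j. real (card (X - A)) - real l) else 0)
      = ((\<Sum>i\<in>?W. Ei i ?g) - (\<lambda>X. real (Suc j) * ?g X)) X"
    proof (cases "X \<in> D")
      case True
      have "?W \<inter> X = X - A" using D[OF True] by auto
      then have c: "(\<Sum>i\<in>?W. (if i \<in> X then 1 else 0::real)) = real (card (X - A))"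
        by (simp add: sum_ind)
      show ?thesis unfolding minus_apply sumEi_apply c using True
        by (simp add: prod.nat_ivl_Suc' algebra_simps)
    next
      case False
      then show ?thesis by (simp add: sumEi_apply)
    qed
  qed
  have "(\<Sum>i\<in>?W. Ei i ?g) \<in> Msp D n 0 (Suc j)"
    by (rule sumEi_Msp) (use Suc in auto)
  moreover have "(\<lambda>X. real (Suc j) * ?g X) \<in> Msp D n 0 (Suc j)"
    using Msp_mono[of 0 0 j "Suc j"] Msp_scale[OF Suc] by auto
  ultimately show ?case unfolding eq by (rule Msp_diff)
qed



definition cs :: "nat \<Rightarrow> nat set \<Rightarrow> real" where
  "cs n X = (\<Sum>i\<in>{1..n}. (if i \<in> X then 1 else 0::real))"

lemma cs_card: "X \<subseteq> {1..n} \<Longrightarrow> cs n X = real (card X)"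
  unfolding cs_def by (simp add: sum_ind Int_absorb1)

lemma Cop_apply: "(\<Sum>i\<in>{1..n}. Ei i g) X = cs n X * g X"
  by (simp add: sumEi_apply cs_def)

lemma Sigma_apply:
  assumes T: "T \<subseteq> {1..n}" and D: "D \<subseteq> Pow {1..n}"
  shows "(\<Sum>i\<in>{1..n} - T. mon D (insert i T)) X = (cs n X - real (card T)) * mon D T X"
proof (cases "X \<in> D \<and> T \<subseteq> X")
  case True
  then have X: "X \<subseteq> {1..n}" using D by auto
  have fT: "finite T" using T by (auto intro: finite_subset)
  have "(\<Sum>i\<in>{1..n} - T. mon D (insert i T)) X = (\<Sum>i\<in>{1..n} - T. (if i \<in> X then 1 else 0::real))"
    unfolding sum_fun_apply using True by (intro sum.cong) (auto simp: mon_def)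
  also have "\<dots> = real (card (({1..n} - T) \<inter> X))" by (simp add: sum_ind)
  also have "({1..n} - T) \<inter> X = X - T" using X by auto
  also have "real (card (X - T)) = real (card X) - real (card T)"
    using True fT by (simp add: card_Diff_subset of_nat_diff card_mono finite_subset[OF X])
  finally show ?thesis using True X by (simp add: cs_card mon_def)
next
  case False
  then have "\<And>i. mon D (insert i T) X = 0" by (auto simp: mon_def)
  moreover have "mon D T X = 0" using False by (simp add: mon_def)
  ultimately show ?thesis by (simp add: sum_fun_apply)
qed

lemma reduce_step:
  assumes T: "T \<subseteq> {1..n}" and D: "D = Dom n lo hi" and k: "card T < lo"
  shows "mon D T \<in> Msp D n (Suc (card T)) (card T + Suc (hi - lo))"
proof -
  let ?k = "card T"
  define Q where "Q j = (\<lambda>X. mon D T X * (\<Prod>c<j. cs n X - real (lo + c)))" for j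
  define P where "P j = (\<Prod>c<j. real ?k - real (lo + c))" for j
  define h where "h j = Q j - (\<lambda>X. P j * mon D T X)" for j
  let ?S = "(\<Sum>i\<in>{1..n} - T. mon D (insert i T))"
  have Dsub: "D \<subseteq> Pow {1..n}" using D by (auto simp: Dom_def)
  have Sig: "?S \<in> Msp D n (Suc ?k) (Suc ?k)"
  proof (rule Msp_sum)
    fix i assume i: "i \<in> {1..n} - T"
    have fT: "finite T" using T by (auto intro: finite_subset)
    have "insert i T \<in> gens n (Suc ?k) (Suc ?k)" using i T fT by (auto simp: gens_def)
    then show "mon D (insert i T) \<in> Msp D n (Suc ?k) (Suc ?k)" by (rule mon_in)
  qed
  have hj: "h j \<in> Msp D n (Suc ?k) (?k + j)" for j
  proof (induction j)
    case 0
    have "h 0 = 0" by (simp add: h_def Q_def P_def fun_eq_iff)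
    then show ?case unfolding Msp_def using V.span_zero[of "mon D ` gens n (Suc ?k) (?k + 0)"]
      by (simp add: zero_fun_def)
  next
    case (Suc j)
    have eq: "h (Suc j) = ((\<Sum>i\<in>{1..n}. Ei i (h j)) - (\<lambda>X. real (lo + j) * h j X)) + (\<lambda>X. P j * ?S X)"
    proof (rule ext)
      fix X
      show "h (Suc j) X = (((\<Sum>i\<in>{1..n}. Ei i (h j)) - (\<lambda>X. real (lo + j) * h j X)) + (\<lambda>X. P j * ?S X)) X"
        unfolding plus_fun_def minus_apply Cop_apply Sigma_apply[OF T Dsub]
        by (simp add: h_def Q_def P_def algebra_simps)
    qed
    have a: "(\<Sum>i\<in>{1..n}. Ei i (h j)) \<in> Msp D n (Suc ?k) (?k + Suc j)"
      using sumEi_Msp[of "{1..n}" n "h j" D "Suc ?k" "?k + j"] Suc by simp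
    have b: "(\<lambda>X. real (lo + j) * h j X) \<in> Msp D n (Suc ?k) (?k + Suc j)"
      using Msp_scale[OF Suc] Msp_mono[of "Suc ?k" "Suc ?k" "?k + j" "?k + Suc j"] by auto
    have c: "(\<lambda>X. P j * ?S X) \<in> Msp D n (Suc ?k) (?k + Suc j)"
      using Msp_scale[OF Sig] Msp_mono[of "Suc ?k" "Suc ?k" "Suc ?k" "?k + Suc j"] by auto
    show ?case unfolding eq by (intro Msp_add Msp_diff a b c)
  qed
  let ?m = "Suc (hi - lo)"
  have Q0: "Q ?m = 0"
  proof (rule ext)
    fix X
    show "Q ?m X = 0 X"
    proof (cases "mon D T X = 0")
      case False
      then have XD: "X \<in> D" by (auto simp: mon_def split: if_splits)
      then have X: "X \<subseteq> {1..n}" "lo \<le> card X" "card X \<le> hi" using D by (auto simp: Dom_def)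
      have "(\<Prod>c<?m. cs n X - real (lo + c)) = 0"
        by (rule prod_zero) (use X in \<open>auto simp: cs_card intro!: bexI[of _ "card X - lo"]\<close>)
      then show ?thesis by (simp add: Q_def)
    qed (simp add: Q_def)
  qed
  have Pnz: "P ?m \<noteq> 0" unfolding P_def using k by (auto simp: prod_zero_iff)
  have "mon D T = (\<lambda>X. (- 1 / P ?m) * h ?m X)"
    using Pnz by (simp add: h_def Q0 fun_eq_iff)
  then show ?thesis using Msp_scale[OF hj[of ?m], of "- 1 / P ?m"] by simp
qed



lemma mon_all:
  assumes D: "D = Dom n s (s + t)" and ts: "t \<le> s"
  shows "T \<subseteq> {1..n} \<Longrightarrow> card T \<le> s \<Longrightarrow> mon D T \<in> Msp D n (s - t) s"
proof (induction "s - card T" arbitrary: T rule: less_induct)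
  case less
  show ?case
  proof (cases "s - t \<le> card T")
    case True
    then show ?thesis using less.prems by (intro mon_in) (auto simp: gens_def)
  next
    case False
    let ?k = "card T"
    have r: "mon D T \<in> Msp D n (Suc ?k) (?k + Suc (s + t - s))"
      using reduce_step[OF less.prems(1) D] False by simp
    have "Msp D n (Suc ?k) (?k + Suc (s + t - s)) \<subseteq> Msp D n (s - t) s"
      unfolding Msp_def[of D n "Suc ?k"]
    proof (rule V.span_minimal)
      show "V.subspace (Msp D n (s - t) s)" unfolding Msp_def by (rule V.subspace_span)
      show "mon D ` gens n (Suc ?k) (?k + Suc (s + t - s)) \<subseteq> Msp D n (s - t) s"
      proof
        fix g assume "g \<in> mon D ` gens n (Suc ?k) (?k + Suc (s + t - s))"
        then obtain S where S: "g = mon D S" "S \<subseteq> {1..n}" "Suc ?k \<le> card S" "card S \<le> ?k + Suc t"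
          by (auto simp: gens_def)
        have "card S \<le> s" using S False by linarith
        moreover have "s - card S < s - card T" using S False by linarith
        ultimately show "g \<in> Msp D n (s - t) s" using less.hyps S by blast
      qed
    qed
    then show ?thesis using r by blast
  qed
qed

lemma card_gens: "card (gens n a b) = (\<Sum>k=a..b. n choose k)"
proof -
  have "gens n a b = (\<Union>k\<in>{a..b}. {S. S \<subseteq> {1..n} \<and> card S = k})"
    by (auto simp: gens_def)
  also have "card \<dots> = (\<Sum>k=a..b. card {S. S \<subseteq> {1..n} \<and> card S = k})"
    by (rule card_UN_disjoint) auto
  also have "\<dots> = (\<Sum>k=a..b. n choose k)"
    by (simp add: n_subsets)
  finally show ?thesis .
qed

lemma finite_gens: "finite (gens n a b)"
  by (rule finite_subset[of _ "Pow {1..n}"]) (auto simp: gens_def)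

lemma poly_bound:
  fixes n s t :: nat and F :: "nat set set"
  assumes cs: "close_sperner {1..s} n F" and ts: "t \<le> s"
    and sz: "\<And>A. A \<in> F \<Longrightarrow> s \<le> card A \<and> card A \<le> s + t"
  shows "card F \<le> (\<Sum>k = s - t..s. n choose k)"
proof -
  define D where "D = Dom n s (s + t)"
  define fa where "fa A = (\<lambda>X. if X \<in> D then (\<Prod>l=1..s. real (card (X - A)) - real l) else (0::real))" for A
  have Fsub: "F \<subseteq> Pow {1..n}" and cl: "\<And>A B. A \<in> F \<Longrightarrow> B \<in> F \<Longrightarrow> A \<noteq> B \<Longrightarrow> skew_dist A B \<in> {1..s}"
    using cs by (auto simp: close_sperner_def)
  have finF: "finite F" using Fsub by (rule finite_subset) auto
  have FD: "F \<subseteq> D" using Fsub sz by (auto simp: D_def Dom_def)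
  have fin: "A \<in> F \<Longrightarrow> finite A" for A using Fsub by (auto intro: finite_subset)
  have key1: "fa A B = 0" if AB: "A \<in> F" "B \<in> F" "A \<noteq> B" "card B \<le> card A" for A B
  proof -
    have sd: "skew_dist A B \<in> {1..s}" using cl AB by blast
    have "card (A - B) = card A - card (A \<inter> B)" using fin[OF AB(1)] by (intro card_Diff_subset_Int) auto
    moreover have "card (B - A) = card B - card (B \<inter> A)" using fin[OF AB(2)] by (intro card_Diff_subset_Int) auto
    moreover have "card (A \<inter> B) \<le> card B" using fin[OF AB(2)] by (simp add: card_mono)
    ultimately have "card (B - A) \<le> card (A - B)" using AB(4) by (simp add: Int_commute)
    then have "skew_dist A B = card (B - A)" by (simp add: skew_dist_def)
    then have "card (B - A) \<in> {1..s}" using sd by simp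
    then have "(\<Prod>l=1..s. real (card (B - A)) - real l) = 0"
      by (intro prod_zero) auto
    then show ?thesis using FD AB by (auto simp: fa_def)
  qed
  have key2: "fa A A \<noteq> 0" if "A \<in> F" for A
    using that FD by (auto simp: fa_def)
  have inj: "inj_on fa F"
  proof (rule inj_onI)
    fix A B assume AB: "A \<in> F" "B \<in> F" "fa A = fa B"
    show "A = B"
    proof (rule ccontr)
      assume ne: "A \<noteq> B"
      show False
      proof (cases "card B \<le> card A")
        case True
        then have "fa A B = 0" using key1 AB ne by blast
        then show False using key2[OF AB(2)] AB(3) by simp
      next
        case False
        then have "fa B A = 0" using key1 AB ne by simp
        then show False using key2[OF AB(1)] AB(3) by simp
      qed
    qed
  qed
  let ?G = "fa ` F"
  have indep: "V.independent ?G"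
  proof (rule V.independent_if_scalars_zero)
    show "finite ?G" using finF by simp
    fix u g
    assume sum0: "(\<Sum>x\<in>?G. (\<lambda>X. u x * x X)) = 0" and g: "g \<in> ?G"
    show "u g = 0"
    proof (rule ccontr)
      assume ug: "u g \<noteq> 0"
      obtain A0 where "A0 \<in> F" "g = fa A0" using g by auto
      then have "A0 \<in> F \<and> u (fa A0) \<noteq> 0" using ug by simp
      then obtain B0 where B0: "B0 \<in> F \<and> u (fa B0) \<noteq> 0"
        and minB: "\<And>A. A \<in> F \<and> u (fa A) \<noteq> 0 \<Longrightarrow> card B0 \<le> card A"
        using ex_has_least_nat[of "\<lambda>A. A \<in> F \<and> u (fa A) \<noteq> 0" A0 card] by blast
      have "(\<Sum>x\<in>?G. (\<lambda>X. u x * x X)) = (\<Sum>A\<in>F. (\<lambda>X. u (fa A) * fa A X))"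
        by (simp add: sum.reindex[OF inj])
      then have "0 = (\<Sum>A\<in>F. (\<lambda>X. u (fa A) * fa A X)) B0" using sum0 by simp
      also have "\<dots> = (\<Sum>A\<in>F. u (fa A) * fa A B0)" by (simp add: sum_fun_apply)
      also have "\<dots> = u (fa B0) * fa B0 B0 + (\<Sum>A\<in>F - {B0}. u (fa A) * fa A B0)"
        using B0 finF by (meson sum.remove)
      also have "(\<Sum>A\<in>F - {B0}. u (fa A) * fa A B0) = 0"
      proof (rule sum.neutral, rule ballI)
        fix A assume A: "A \<in> F - {B0}"
        show "u (fa A) * fa A B0 = 0"
        proof (cases "u (fa A) = 0")
          case False
          then have "card B0 \<le> card A" using minB A by blast
          then have "fa A B0 = 0" using key1[of A B0] A B0 by auto
          then show ?thesis by simp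
        qed simp
      qed
      finally show False using B0 key2[of B0] by simp
    qed
  qed
  have span: "?G \<subseteq> V.span (mon D ` gens n (s - t) s)"
  proof
    fix g assume "g \<in> ?G"
    then obtain A where A: "g = fa A" by auto
    have DD: "\<And>X. X \<in> D \<Longrightarrow> X \<subseteq> {1..n}" by (auto simp: D_def Dom_def)
    have "g \<in> Msp D n 0 s" unfolding A fa_def by (rule gj_Msp[OF DD])
    moreover have "Msp D n 0 s \<subseteq> Msp D n (s - t) s"
      unfolding Msp_def[of D n 0]
    proof (rule V.span_minimal)
      show "V.subspace (Msp D n (s - t) s)" unfolding Msp_def by (rule V.subspace_span)
      show "mon D ` gens n 0 s \<subseteq> Msp D n (s - t) s"
        using mon_all[OF D_def ts] by (auto simp: gens_def)
    qed
    ultimately show "g \<in> V.span (mon D ` gens n (s - t) s)" unfolding Msp_def by blast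
  qed
  have "card ?G \<le> card (mon D ` gens n (s - t) s)"
    using V.independent_span_bound[OF _ indep span] finite_gens by blast
  also have "\<dots> \<le> card (gens n (s - t) s)" by (rule card_image_le[OF finite_gens])
  finally show ?thesis using card_image[OF inj] card_gens by simp
qed



lemma skew_dist_sym: "skew_dist A B = skew_dist B A"
  by (simp add: skew_dist_def min.commute)

lemma sd_in:
  assumes "finite X" "finite Y" "\<not> X \<subseteq> Y" "\<not> Y \<subseteq> X" "card X \<le> s"
  shows "skew_dist X Y \<in> {1..s}"
proof -
  have "card (X - Y) \<noteq> 0" using assms by auto
  moreover have "card (Y - X) \<noteq> 0" using assms by auto
  moreover have "card (X - Y) \<le> card X" using assms by (simp add: card_mono)
  ultimately show ?thesis using assms(5) by (auto simp: skew_dist_def min_def)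
qed

lemma cs_nosub:
  assumes "close_sperner L n F" "0 \<notin> L" "A \<in> F" "B \<in> F" "A \<noteq> B" "A \<subseteq> B"
  shows False
proof -
  have "skew_dist A B \<in> L" using assms unfolding close_sperner_def by blast
  moreover have "A - B = {}" using assms(6) by blast
  then have c: "card (A - B) = 0" by (metis card.empty)
  have "skew_dist A B = 0" unfolding skew_dist_def c by simp
  ultimately show False using assms(2) by metis
qed

lemma card_filter_sum: "finite S \<Longrightarrow> card {x\<in>S. P x} = (\<Sum>x\<in>S. if P x then 1 else 0)"
  by (simp add: sum.If_cases Int_def)

lemma shadow_count:
  assumes L: "\<And>A. A \<in> L \<Longrightarrow> A \<subseteq> {1..n} \<and> card A = lo"
    and N: "N = {B. B \<subseteq> {1..n} \<and> card B = Suc lo \<and> (\<exists>A\<in>L. A \<subseteq> B)}"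
    and lo: "Suc lo \<le> n - lo"
  shows "card L \<le> card N"
proof -
  have finL: "finite L" by (rule finite_subset[of _ "Pow {1..n}"]) (use L in auto)
  have finN: "finite N" by (rule finite_subset[of _ "Pow {1..n}"]) (use N in auto)
  have a: "n - lo \<le> card {B\<in>N. A \<subseteq> B}" if A: "A \<in> L" for A
  proof -
    have As: "A \<subseteq> {1..n}" "card A = lo" using L A by auto
    have fA: "finite A" using As by (auto intro: finite_subset)
    have inj: "inj_on (\<lambda>x. insert x A) ({1..n} - A)"
      by (rule inj_onI) (auto simp: insert_ident)
    have sub: "(\<lambda>x. insert x A) ` ({1..n} - A) \<subseteq> {B\<in>N. A \<subseteq> B}"
      using As fA A by (auto simp: N)
    have "card ({1..n} - A) = n - lo" using As fA by (simp add: card_Diff_subset)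
    then have "n - lo = card ((\<lambda>x. insert x A) ` ({1..n} - A))" using card_image[OF inj] by simp
    also have "\<dots> \<le> card {B\<in>N. A \<subseteq> B}" by (rule card_mono) (use finN sub in auto)
    finally show ?thesis .
  qed
  have b: "card {A\<in>L. A \<subseteq> B} \<le> Suc lo" if B: "B \<in> N" for B
  proof -
    have Bs: "B \<subseteq> {1..n}" "card B = Suc lo" using B N by auto
    have fB: "finite B" using Bs by (auto intro: finite_subset)
    have "{A\<in>L. A \<subseteq> B} \<subseteq> (\<lambda>x. B - {x}) ` B"
    proof
      fix A assume A: "A \<in> {A\<in>L. A \<subseteq> B}"
      then have "card A = lo" "A \<subseteq> B" using L by auto
      then have "card (B - A) = 1" using Bs fB by (simp add: card_Diff_subset finite_subset)
      then obtain x where x: "B - A = {x}" by (auto simp: card_Suc_eq)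
      then have "A = B - {x}" using \<open>A \<subseteq> B\<close> by blast
      moreover have "x \<in> B" using x by blast
      ultimately show "A \<in> (\<lambda>x. B - {x}) ` B" by blast
    qed
    then have "card {A\<in>L. A \<subseteq> B} \<le> card ((\<lambda>x. B - {x}) ` B)" by (intro card_mono) (use fB in auto)
    also have "\<dots> \<le> card B" by (rule card_image_le[OF fB])
    finally show ?thesis using Bs by simp
  qed
  have "card L * (n - lo) = (\<Sum>A\<in>L. n - lo)" by simp
  also have "\<dots> \<le> (\<Sum>A\<in>L. card {B\<in>N. A \<subseteq> B})" by (rule sum_mono) (rule a)
  also have "\<dots> = (\<Sum>A\<in>L. \<Sum>B\<in>N. if A \<subseteq> B then 1 else 0)"
    using finN by (simp add: card_filter_sum)
  also have "\<dots> = (\<Sum>B\<in>N. \<Sum>A\<in>L. if A \<subseteq> B then 1 else 0)" by (rule sum.swap)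
  also have "\<dots> = (\<Sum>B\<in>N. card {A\<in>L. A \<subseteq> B})"
    using finL by (simp add: card_filter_sum)
  also have "\<dots> \<le> (\<Sum>B\<in>N. Suc lo)" by (rule sum_mono) (rule b)
  also have "\<dots> = card N * Suc lo" by simp
  finally have "card L * (n - lo) \<le> card N * Suc lo" .
  moreover have "card L * Suc lo \<le> card L * (n - lo)" by (rule mult_le_mono2[OF lo])
  ultimately have "card L * Suc lo \<le> card N * Suc lo" by linarith
  then show ?thesis using mult_le_cancel2 by blast
qed



lemma push_up:
  assumes cs: "close_sperner {1..s} n F" and lo: "lo < s" and sn: "2 * s \<le> n"
    and sz: "\<And>A. A \<in> F \<Longrightarrow> lo \<le> card A \<and> card A \<le> hi" and hi: "Suc lo \<le> hi"
  shows "\<exists>F'. close_sperner {1..s} n F' \<and> card F \<le> card F' \<and> (\<forall>A\<in>F'. Suc lo \<le> card A \<and> card A \<le> hi)"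
proof -
  define L where "L = {A\<in>F. card A = lo}"
  define N where "N = {B. B \<subseteq> {1..n} \<and> card B = Suc lo \<and> (\<exists>A\<in>L. A \<subseteq> B)}"
  define F' where "F' = (F - L) \<union> N"
  have Fsub: "F \<subseteq> Pow {1..n}" using cs by (auto simp: close_sperner_def)
  have finF: "finite F" using Fsub by (rule finite_subset) auto
  have finN: "finite N" by (rule finite_subset[of _ "Pow {1..n}"]) (auto simp: N_def)
  have fin: "\<And>A. A \<subseteq> {1..n} \<Longrightarrow> finite A" by (auto intro: finite_subset)
  have ns: "\<And>A B. A \<in> F \<Longrightarrow> B \<in> F \<Longrightarrow> A \<noteq> B \<Longrightarrow> A \<subseteq> B \<Longrightarrow> False"
    using cs_nosub[OF cs] by auto
  have disj: "(F - L) \<inter> N = {}"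
  proof (rule ccontr)
    assume "(F - L) \<inter> N \<noteq> {}"
    then obtain B where B: "B \<in> F" "B \<in> N" by auto
    then obtain A where A: "A \<in> L" "A \<subseteq> B" by (auto simp: N_def)
    have "A \<noteq> B" using A B by (auto simp: L_def N_def)
    then show False using ns[of A B] A B by (auto simp: L_def)
  qed
  have LN: "card L \<le> card N"
    by (rule shadow_count[OF _ N_def]) (use Fsub lo sn in \<open>auto simp: L_def\<close>)
  have "card F = card (F - L) + card L"
    using finF by (metis L_def card_Diff_subset card_mono le_add_diff_inverse2 mem_Collect_eq subsetI
        finite_subset)
  also have "\<dots> \<le> card (F - L) + card N" using LN by simp
  also have "\<dots> = card F'" unfolding F'_def using disj finF finN by (simp add: card_Un_disjoint)
  finally have cardle: "card F \<le> card F'" .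
  have szN: "\<And>B. B \<in> N \<Longrightarrow> card B = Suc lo" by (auto simp: N_def)
  have sz': "\<forall>A\<in>F'. Suc lo \<le> card A \<and> card A \<le> hi"
    using sz hi by (force simp: F'_def L_def N_def)
  have newpair: "skew_dist X Y \<in> {1..s}" if X: "X \<in> N" and Y: "Y \<in> F'" and XY: "X \<noteq> Y" for X Y
  proof -
    have Xs: "X \<subseteq> {1..n}" "card X = Suc lo" using X by (auto simp: N_def)
    obtain A where A: "A \<in> L" "A \<subseteq> X" using X by (auto simp: N_def)
    have AF: "A \<in> F" "card A = lo" using A by (auto simp: L_def)
    have Ys: "Y \<subseteq> {1..n}" using Y Fsub by (auto simp: F'_def N_def)
    have "\<not> X \<subseteq> Y \<and> \<not> Y \<subseteq> X"
    proof (cases "Y \<in> N")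
      case True
      have "card Y = Suc lo" using True by (auto simp: N_def)
      then show ?thesis using XY Xs card_subset_eq[OF fin[OF Xs(1)]] card_subset_eq[OF fin[OF Ys]]
        by metis
    next
      case False
      then have YF: "Y \<in> F" "card Y \<noteq> lo" using Y by (auto simp: F'_def L_def)
      have "card Y \<ge> lo" using sz YF by auto
      then have cY: "card Y \<ge> Suc lo" using YF by simp
      have "\<not> X \<subseteq> Y"
      proof
        assume "X \<subseteq> Y"
        then have "A \<subseteq> Y" using A by auto
        moreover have "A \<noteq> Y" using AF YF by auto
        ultimately show False using ns AF YF by blast
      qed
      moreover have "\<not> Y \<subseteq> X"
      proof
        assume YX: "Y \<subseteq> X"
        then have "card Y \<le> card X" using card_mono fin[OF Xs(1)] by blast
        then have "card Y = card X" using cY Xs by simp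
        then have "Y = X" using card_subset_eq[OF fin[OF Xs(1)] YX] by simp
        then show False using XY by simp
      qed
      ultimately show ?thesis by blast
    qed
    then show ?thesis using sd_in[OF fin[OF Xs(1)] fin[OF Ys]] Xs lo by auto
  qed
  have "close_sperner {1..s} n F'"
    unfolding close_sperner_def
  proof (intro conjI ballI impI)
    show "F' \<subseteq> Pow {1..n}" using Fsub by (auto simp: F'_def N_def)
    fix X Y assume X: "X \<in> F'" and Y: "Y \<in> F'" and XY: "X \<noteq> Y"
    show "skew_dist X Y \<in> {1..s}"
    proof (cases "X \<in> N")
      case True
      then show ?thesis using newpair X Y XY by blast
    next
      case XN: False
      show ?thesis
      proof (cases "Y \<in> N")
        case True
        then show ?thesis using newpair[of Y X] X XY skew_dist_sym by metis
      next
        case False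
        then have "X \<in> F" "Y \<in> F" using X Y XN by (auto simp: F'_def)
        then show ?thesis using cs XY by (auto simp: close_sperner_def)
      qed
    qed
  qed
  then show ?thesis using cardle sz' by blast
qed

lemma iter_up:
  assumes cs: "close_sperner {1..s} n F" and sn: "2 * s \<le> n" and shi: "s \<le> hi"
    and sz: "\<And>A. A \<in> F \<Longrightarrow> card A \<le> hi"
  shows "\<exists>F'. close_sperner {1..s} n F' \<and> card F \<le> card F' \<and> (\<forall>A\<in>F'. s \<le> card A \<and> card A \<le> hi)"
proof -
  have "lo \<le> s \<Longrightarrow> \<exists>F'. close_sperner {1..s} n F' \<and> card F \<le> card F' \<and> (\<forall>A\<in>F'. lo \<le> card A \<and> card A \<le> hi)" for lo
  proof (induction lo)
    case 0
    then show ?case using cs sz by blast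
  next
    case (Suc lo)
    then obtain F1 where F1: "close_sperner {1..s} n F1" "card F \<le> card F1" "\<forall>A\<in>F1. lo \<le> card A \<and> card A \<le> hi"
      by auto
    obtain F2 where F2: "close_sperner {1..s} n F2" "card F1 \<le> card F2" "\<forall>A\<in>F2. Suc lo \<le> card A \<and> card A \<le> hi"
      using push_up[OF F1(1) _ sn, of lo hi] F1(3) Suc.prems shi by auto
    then show ?case using F1(2) by (intro exI[of _ F2]) auto
  qed
  then show ?thesis by blast
qed

lemma compl_cs:
  assumes cs: "close_sperner L n F"
  shows "close_sperner L n ((\<lambda>A. {1..n} - A) ` F) \<and> card ((\<lambda>A. {1..n} - A) ` F) = card F
     \<and> (\<forall>A\<in>F. card ({1..n} - A) = n - card A)"
proof -
  have Fsub: "F \<subseteq> Pow {1..n}" using cs by (auto simp: close_sperner_def)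
  have inj: "inj_on (\<lambda>A. {1..n} - A) F"
    by (rule inj_onI) (use Fsub in blast)
  have c: "\<forall>A\<in>F. card ({1..n} - A) = n - card A"
  proof
    fix A assume "A \<in> F"
    then have A: "A \<subseteq> {1..n}" using Fsub by auto
    then have "finite A" by (rule finite_subset) simp
    then show "card ({1..n} - A) = n - card A" using A by (simp add: card_Diff_subset)
  qed
  have "close_sperner L n ((\<lambda>A. {1..n} - A) ` F)"
    unfolding close_sperner_def
  proof (intro conjI ballI impI)
    show "(\<lambda>A. {1..n} - A) ` F \<subseteq> Pow {1..n}" by auto
    fix X Y assume "X \<in> (\<lambda>A. {1..n} - A) ` F" "Y \<in> (\<lambda>A. {1..n} - A) ` F" "X \<noteq> Y"
    then obtain A B where AB: "A \<in> F" "B \<in> F" "X = {1..n} - A" "Y = {1..n} - B" "A \<noteq> B" by auto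
    have "X - Y = B - A" "Y - X = A - B" using AB Fsub by auto
    then have "skew_dist X Y = skew_dist A B" by (simp add: skew_dist_def min.commute)
    then show "skew_dist X Y \<in> L" using cs AB by (auto simp: close_sperner_def)
  qed
  then show ?thesis using card_image[OF inj] c by simp
qed

theorem mainTheorem6:
  fixes n s :: nat and F :: "nat set set"
  assumes "n + 1 \<le> 3 * s" and "2 * s \<le> n"
    and "close_sperner {1..s} n F"
  shows "card F \<le> (\<Sum>i = 3 * s - n..s. n choose i)"
proof -
  have Fsub: "F \<subseteq> Pow {1..n}" using assms(3) by (auto simp: close_sperner_def)
  have szF: "\<And>A. A \<in> F \<Longrightarrow> card A \<le> n"
    using Fsub by (auto intro: card_mono[of "{1..n}", simplified])
  obtain F1 where F1: "close_sperner {1..s} n F1" "card F \<le> card F1" "\<forall>A\<in>F1. s \<le> card A \<and> card A \<le> n"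
    using iter_up[OF assms(3) assms(2) _ szF] assms(2) by auto
  let ?G1 = "(\<lambda>A. {1..n} - A) ` F1"
  have G1: "close_sperner {1..s} n ?G1" "card ?G1 = card F1" "\<forall>A\<in>?G1. card A \<le> n - s"
    using compl_cs[OF F1(1)] F1(3) by auto
  have sns: "s \<le> n - s" using assms(2) by simp
  have "\<exists>F'. close_sperner {1..s} n F' \<and> card ?G1 \<le> card F' \<and> (\<forall>A\<in>F'. s \<le> card A \<and> card A \<le> n - s)"
    by (rule iter_up[OF G1(1) assms(2) sns]) (use G1(3) in blast)
  then obtain G2 where G2: "close_sperner {1..s} n G2" "card ?G1 \<le> card G2" "\<forall>A\<in>G2. s \<le> card A \<and> card A \<le> n - s"
    by blast
  let ?F3 = "(\<lambda>A. {1..n} - A) ` G2"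
  have F3: "close_sperner {1..s} n ?F3" "card ?F3 = card G2" "\<forall>A\<in>?F3. s \<le> card A \<and> card A \<le> s + (n - 2 * s)"
    using compl_cs[OF G2(1)] G2(3) assms(2) by auto
  have "card ?F3 \<le> (\<Sum>k = s - (n - 2 * s)..s. n choose k)"
    by (rule poly_bound[OF F3(1)]) (use F3(3) assms in auto)
  moreover have "s - (n - 2 * s) = 3 * s - n" using assms by simp
  ultimately show ?thesis using F1(2) G1(2) G2(2) F3(2) by simp
qed

end
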